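(* For every $n\ge 1$ and every Dyck path $D\in\mathcal{D}_n$, the poset $\psi(D)$ is isomorphic to $\Xi_{\mathrm{poset}}(\Lambda_{\mathrm{steep}}(D))$; that is, $\psi=\Xi_{\mathrm{poset}}\circ\Lambda_{\mathrm{steep}}$ as maps to unit interval posets up to isomorphism.
   Context: A Dyck path of size $n$ is a lattice path from $(0,0)$ to $(n,n)$ with steps $\uparrow=(0,1)$ and $\rightarrow=(1,0)$ staying weakly above $y=x$; $\mathcal{D}_n$ is their set. Its area vector $(a_1,\dots,a_n)$ has $a_i$ equal to the number of full unit squares lying between the path and the diagonal $y=x$ in the row $i-1\le y\le i$. A plane tree is either a single node, or a root joined to an ordered (left-to-right) sequence of plane trees whose roots are its children; $\mathcal{T}_n$ is the set of plane trees with $n$ non-root nodes; the depth $d(u)$ of a node is its distance to the root. For a finite $S=\{x_1<\dots<x_n\}\subset\mathbb{R}$, $\preceq_S$ is the partial order on $[n]$ with $i\prec_S j$ iff $x_i+1<x_j$. $\Xi_{\mathrm{steep}}$: for $T\in\mathcal{T}_n$, perform the clockwise contour walk around $T$ starting at the root (so subtrees are visited from right to left); append $\uparrow$ each time an edge is traversed for the first time and $\rightarrow$ each time it is traversed for the second time. This is a bijection $\mathcal{T}_n\to\mathcal{D}_n$; $\Lambda_{\mathrm{steep}}$ is its inverse. $\Xi_{\mathrm{poset}}$: for $T\in\mathcal{T}_n$ with maximal number of children $m$, for a non-root node $u$ let $c(u)=i$ if $u$ is the $i$-th child of its parent counted from right to left; with $u_0=\text{root},\dots,u_{d(u)}=u$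 the root-to-$u$ path set $x_u=d(u)+\sum_{i=1}^{d(u)}c(u_i)(m+2)^{-i}$; with $S=\{x_u: u\text{ non-root}\}$, $\Xi_{\mathrm{poset}}(T)=([n],\preceq_S)$. $\psi$: for $D\in\mathcal{D}_n$ with area vector $(a_1,\dots,a_n)$, $\psi(D)$ is the poset on $[n]$ with $i\prec j$ iff either $a_i+2\le a_j$, or ($a_i+1=a_j$ and $i<j$). *)

theory Defs
  imports Complex_Main
begin

datatype ptree = Node "ptree list"

fun children :: "ptree \<Rightarrow> ptree list" where
  "children (Node cs) = cs"

fun tsize :: "ptree \<Rightarrow> nat" where
  "tsize (Node cs) = (\<Sum>c\<leftarrow>cs. Suc (tsize c))"

definition plane_trees :: "nat \<Rightarrow> ptree set" where
  "plane_trees n = {T. tsize T = n}"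

fun maxch :: "ptree \<Rightarrow> nat" where
  "maxch (Node cs) = Max (insert (length cs) (set (map maxch cs)))"

text \<open>A path is a list of steps: True = up step (0,1), False = right step (1,0).\<close>
definition count_up :: "bool list \<Rightarrow> nat" where
  "count_up D = length (filter (\<lambda>s. s) D)"

definition count_right :: "bool list \<Rightarrow> nat" where
  "count_right D = length (filter (\<lambda>s. \<not> s) D)"

definition dyck_paths :: "nat \<Rightarrow> bool list set" where
  "dyck_paths n = {D. count_up D = n \<and> count_right D = n \<and>
      (\<forall>k \<le> length D. count_right (take k D) \<le> count_up (take k D))}"

text \<open>Area vector: the i-th up step (i = 1..n) starts at (r, i-1), where r is the
  number of right steps before it; row i-1 <= y <= i then contains (i-1) - r full
  unit squares between the path and the diagonal. u = number of up steps so far,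
  r = number of right steps so far.\<close>
fun area_aux :: "nat \<Rightarrow> nat \<Rightarrow> bool list \<Rightarrow> nat list" where
  "area_aux u r [] = []"
| "area_aux u r (True # D) = (u - r) # area_aux (Suc u) r D"
| "area_aux u r (False # D) = area_aux u (Suc r) D"

definition area_vector :: "bool list \<Rightarrow> nat list" where
  "area_vector D = area_aux 0 0 D"

text \<open>a_i for 1-based i.\<close>
definition area :: "bool list \<Rightarrow> nat \<Rightarrow> nat" where
  "area D i = area_vector D ! (i - 1)"

text \<open>A poset is given by its carrier and its strict order relation.\<close>
type_synonym poset = "nat set \<times> (nat \<Rightarrow> nat \<Rightarrow> bool)"

definition poset_iso :: "poset \<Rightarrow> poset \<Rightarrow> bool" where
  "poset_iso P Q \<longleftrightarrow> (\<exists>f. bij_betw f (fst P) (fst Q) \<and>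
      (\<forall>i\<in>fst P. \<forall>j\<in>fst P. snd P i j \<longleftrightarrow> snd Q (f i) (f j)))"

definition psi :: "bool list \<Rightarrow> poset" where
  "psi D = ({1..count_up D},
     (\<lambda>i j. i \<in> {1..count_up D} \<and> j \<in> {1..count_up D} \<and>
        (area D i + 2 \<le> area D j \<or> (area D i + 1 = area D j \<and> i < j))))"

text \<open>Clockwise contour walk from the root: subtrees visited right to left;
  up step on first traversal of an edge, right step on the second.\<close>
fun Xi_steep :: "ptree \<Rightarrow> bool list" where
  "Xi_steep (Node cs) = concat (map (\<lambda>c. True # Xi_steep c @ [False]) (rev cs))"

definition Lambda_steep :: "bool list \<Rightarrow> ptree" where
  "Lambda_steep D = (THE T. Xi_steep T = D)"

text \<open>Non-root nodes are encoded by the list (c(u_1), ..., c(u_d)) of right-to-left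
  child indices along the root-to-node path. In a list c # cs of children, the
  first child c has right-to-left index length (c # cs).\<close>
fun node_codes :: "ptree \<Rightarrow> nat list list"
  and node_codes_list :: "ptree list \<Rightarrow> nat list list" where
  "node_codes (Node cs) = node_codes_list cs"
| "node_codes_list [] = []"
| "node_codes_list (c # cs) =
     map (Cons (length (c # cs))) ([] # node_codes c) @ node_codes_list cs"

definition xval :: "nat \<Rightarrow> nat list \<Rightarrow> real" where
  "xval m p = real (length p) + (\<Sum>i<length p. real (p ! i) / (real m + 2) ^ (i + 1))"

definition Xi_S :: "ptree \<Rightarrow> real set" where
  "Xi_S T = xval (maxch T) ` set (node_codes T)"

definition unit_interval_poset :: "real set \<Rightarrow> poset" where
  "unit_interval_poset S = ({1..card S},
     (\<lambda>i j. i \<in> {1..card S} \<and> j \<in> {1..card S} \<and>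
        sorted_list_of_set S ! (i - 1) + 1 < sorted_list_of_set S ! (j - 1)))"

definition Xi_poset :: "ptree \<Rightarrow> poset" where
  "Xi_poset T = unit_interval_poset (Xi_S T)"

end

theory Submission
  imports Defs
begin

fun rl :: "ptree \<Rightarrow> nat list list" and rlf :: "ptree list \<Rightarrow> nat list list" where
  "rl (Node cs) = rlf cs"
| "rlf [] = []"
| "rlf (c # cs) = rlf cs @ map (Cons (length (c # cs))) ([] # rl c)"

lemma area_main:
  "r \<le> u \<Longrightarrow> area_aux u r (Xi_steep T @ ys) =
     map (\<lambda>p. u - r + length p - 1) (rl T) @ area_aux (u + tsize T) (r + tsize T) ys"
proof (induction T arbitrary: u r ys)
  case (Node cs)
  have "\<forall>u r ys. r \<le> u \<longrightarrow> area_aux u r (Xi_steep (Node cs) @ ys) =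
     map (\<lambda>p. u - r + length p - 1) (rlf cs) @ area_aux (u + tsize (Node cs)) (r + tsize (Node cs)) ys"
    using Node.IH
  proof (induction cs)
    case Nil show ?case by simp
  next
    case (Cons c cs)
    show ?case
    proof (intro allI impI)
      fix u r ys assume ru: "(r::nat) \<le> u"
      define t where "t = tsize (Node cs)"
      define tc where "tc = tsize c"
      have IHc: "\<And>u r ys. r \<le> u \<Longrightarrow> area_aux u r (Xi_steep c @ ys) =
          map (\<lambda>p. u - r + length p - 1) (rl c) @ area_aux (u + tsize c) (r + tsize c) ys"
        using Cons.prems by simp
      have IHcs: "\<And>u r ys. r \<le> u \<Longrightarrow> area_aux u r (Xi_steep (Node cs) @ ys) =
          map (\<lambda>p. u - r + length p - 1) (rlf cs) @ area_aux (u + t) (r + t) ys"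
        using Cons.IH Cons.prems t_def by simp
      have e1: "Xi_steep (Node (c#cs)) @ ys = Xi_steep (Node cs) @ (True # Xi_steep c @ False # ys)"
        by simp
      have "area_aux u r (Xi_steep (Node (c#cs)) @ ys) =
         map (\<lambda>p. u - r + length p - 1) (rlf cs) @ area_aux (u + t) (r + t) (True # Xi_steep c @ False # ys)"
        unfolding e1 using IHcs ru by blast
      also have "area_aux (u + t) (r + t) (True # Xi_steep c @ False # ys) =
         (u - r) # area_aux (Suc (u + t)) (r + t) (Xi_steep c @ False # ys)" by simp
      also have "area_aux (Suc (u + t)) (r + t) (Xi_steep c @ False # ys) =
         map (\<lambda>p. Suc (u + t) - (r + t) + length p - 1) (rl c) @ area_aux (Suc (u + t) + tc) (r + t + tc) (False # ys)"
        using IHc ru tc_def by simp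
      also have "area_aux (Suc (u + t) + tc) (r + t + tc) (False # ys) = 
          area_aux (u + tsize (Node (c#cs))) (r + tsize (Node (c#cs))) ys"
        by (simp add: t_def tc_def add_ac)
      also have "map (\<lambda>p. Suc (u + t) - (r + t) + length p - 1) (rl c) = map (\<lambda>p. u - r + length p - 1) (map (Cons (length (c#cs))) (rl c))"
        using ru by simp
      finally show "area_aux u r (Xi_steep (Node (c#cs)) @ ys) =
         map (\<lambda>p. u - r + length p - 1) (rlf (c#cs)) @ area_aux (u + tsize (Node (c#cs))) (r + tsize (Node (c#cs))) ys"
        by simp
    qed
  qed
  then show ?case using Node.prems by simp
qed

definition hh :: "bool list \<Rightarrow> int" where
  "hh xs = int (count_up xs) - int (count_right xs)"

lemma hh_simps[simp]: "hh [] = 0" "hh (True # xs) = hh xs + 1" "hh (False # xs) = hh xs - 1"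
  "hh (a @ b) = hh a + hh b"
  by (auto simp: hh_def count_up_def count_right_def)

definition dyck :: "bool list \<Rightarrow> bool" where
  "dyck xs \<longleftrightarrow> hh xs = 0 \<and> (\<forall>ys zs. xs = ys @ zs \<longrightarrow> hh ys \<ge> 0)"

lemma dyck_Nil: "dyck []" by (simp add: dyck_def)

lemma dyck_append: "dyck a \<Longrightarrow> dyck b \<Longrightarrow> dyck (a @ b)"
  unfolding dyck_def
  by (auto simp: append_eq_append_conv2)

lemma dyck_blk: "dyck w \<Longrightarrow> dyck (True # w @ [False])"
  unfolding dyck_def
proof (intro conjI allI impI)
  fix ys zs assume d: "hh w = 0 \<and> (\<forall>ys zs. w = ys @ zs \<longrightarrow> 0 \<le> hh ys)"
    and e: "True # w @ [False] = ys @ zs"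
  show "0 \<le> hh ys"
  proof (cases ys)
    case Nil then show ?thesis by simp
  next
    case (Cons y ys')
    then have y: "y = True" and e2: "w @ [False] = ys' @ zs" using e by auto
    from e2 consider (a) us where "w = ys' @ us" | (b) us where "ys' = w @ us" "[False] = us @ zs"
      by (auto simp: append_eq_append_conv2)
    then show ?thesis
    proof cases
      case a then show ?thesis using d Cons y by fastforce
    next
      case b
      then have "us = [] \<or> us = [False]" by (cases us) auto
      then show ?thesis using b d Cons y by auto
    qed
  qed
qed (auto)

lemma Xi_cons: "Xi_steep (Node (c#cs)) = Xi_steep (Node cs) @ True # Xi_steep c @ [False]"
  by simp

lemma dyck_Xi: "dyck (Xi_steep T)"
proof (induction T)
  case (Node cs)
  then show ?case
  proof (induction cs)
    case Nil then show ?case by (simp add: dyck_Nil)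
  next
    case (Cons c cs)
    then show ?case unfolding Xi_cons
      by (intro dyck_append) (auto intro!: dyck_blk[simplified])
  qed
qed

lemma cnt_simps[simp]: "count_up [] = 0" "count_right [] = 0"
  "count_up (True # xs) = Suc (count_up xs)" "count_up (False # xs) = count_up xs"
  "count_right (True # xs) = count_right xs" "count_right (False # xs) = Suc (count_right xs)"
  "count_up (a @ b) = count_up a + count_up b" "count_right (a @ b) = count_right a + count_right b"
  by (auto simp: count_up_def count_right_def)

lemma counts_Xi: "count_up (Xi_steep T) = tsize T \<and> count_right (Xi_steep T) = tsize T"
proof (induction T)
  case (Node cs)
  then show ?case
  proof (induction cs)
    case Nil then show ?case by simp
  next
    case (Cons c cs)
    have "count_up (Xi_steep c) = tsize c \<and> count_right (Xi_steep c) = tsize c" using Cons.prems by simp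
    moreover have "count_up (Xi_steep (Node cs)) = tsize (Node cs) \<and> count_right (Xi_steep (Node cs)) = tsize (Node cs)"
      using Cons.prems Cons.IH by simp
    moreover have "tsize (Node (c#cs)) = Suc (tsize c) + tsize (Node cs)" by simp
    ultimately show ?case unfolding Xi_cons by (simp del: Xi_steep.simps tsize.simps)
  qed
qed

lemma dyck_split_unique:
  assumes "dyck w1" "dyck w2" "w1 @ False # r1 = w2 @ False # r2"
  shows "w1 = w2"
proof -
  have *: False if "dyck a" "dyck b" "a @ False # r = b @ False # s" "length a < length b" for a b r s
  proof -
    have "a @ [False] = take (length a + 1) (a @ False # r)" by simp
    also have "\<dots> = take (length a + 1) (b @ False # s)" using that(3) by simp
    also have "\<dots> = take (length a + 1) b" using that(4) by simp
    finally have "b = (a @ [False]) @ drop (length a + 1) b" by simp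
    then have "hh (a @ [False]) \<ge> 0" using that(2) unfolding dyck_def by blast
    then show False using that(1) by (simp add: dyck_def)
  qed
  show ?thesis
  proof (cases "length w1 = length w2")
    case True then show ?thesis using assms(3) by (simp add: append_eq_append_conv)
  next
    case False
    then show ?thesis using *[OF assms(1,2,3)] *[OF assms(2,1) assms(3)[symmetric]] by (meson linorder_neqE_nat)
  qed
qed

lemma Xi_inj: "Xi_steep T1 = Xi_steep T2 \<Longrightarrow> T1 = T2"
proof (induction T1 arbitrary: T2)
  case (Node cs1)
  obtain cs2 where T2: "T2 = Node cs2" by (cases T2)
  have "\<forall>fs2. set fs1 \<subseteq> set cs1 \<longrightarrow> concat (map (\<lambda>c. True # Xi_steep c @ [False]) fs1) =
     concat (map (\<lambda>c. True # Xi_steep c @ [False]) fs2) \<longrightarrow> fs1 = fs2" for fs1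
  proof (induction fs1)
    case Nil then show ?case by auto
  next
    case (Cons c fs1)
    show ?case
    proof (intro allI impI)
      fix fs2 assume s: "set (c # fs1) \<subseteq> set cs1"
        and e: "concat (map (\<lambda>c. True # Xi_steep c @ [False]) (c # fs1)) =
          concat (map (\<lambda>c. True # Xi_steep c @ [False]) fs2)"
      obtain d fs2' where fs2: "fs2 = d # fs2'" using e by (cases fs2) auto
      have e2: "Xi_steep c @ False # concat (map (\<lambda>c. True # Xi_steep c @ [False]) fs1) =
          Xi_steep d @ False # concat (map (\<lambda>c. True # Xi_steep c @ [False]) fs2')"
        using e fs2 by simp
      have "Xi_steep c = Xi_steep d" using dyck_split_unique[OF dyck_Xi dyck_Xi e2] .
      then have cd: "c = d" using Node.IH s by auto
      then have "concat (map (\<lambda>c. True # Xi_steep c @ [False]) fs1) =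
          concat (map (\<lambda>c. True # Xi_steep c @ [False]) fs2')" using e2 by simp
      then have "fs1 = fs2'" using Cons.IH s by auto
      then show "c # fs1 = fs2" using cd fs2 by simp
    qed
  qed
  note H = this
  have "rev cs1 = rev cs2" by (rule H[of "rev cs1", rule_format]) (use Node.prems T2 in simp_all)
  then show ?case using T2 by simp
qed

lemma first_return:
  "hh xs + int c < 0 \<Longrightarrow> \<exists>w r. xs = w @ False # r \<and> hh w + int c = 0 \<and>
     (\<forall>p q. w = p @ q \<longrightarrow> hh p + int c \<ge> 0)"
proof (induction xs arbitrary: c)
  case Nil then show ?case by simp
next
  case (Cons x xs)
  show ?case
  proof (cases x)
    case True
    then have "hh xs + int (Suc c) < 0" using Cons.prems by simp
    from Cons.IH[OF this] obtain w r where wr: "xs = w @ False # r" "hh w + int (Suc c) = 0"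
      "\<forall>p q. w = p @ q \<longrightarrow> hh p + int (Suc c) \<ge> 0" by blast
    show ?thesis
    proof (intro exI conjI allI impI)
      show "x # xs = (True # w) @ False # r" using wr True by simp
      show "hh (True # w) + int c = 0" using wr by simp
      fix p q assume "True # w = p @ q"
      then show "0 \<le> hh p + int c" using wr by (cases p) auto
    qed
  next
    case False
    show ?thesis
    proof (cases c)
      case 0
      then show ?thesis using False by (intro exI[of _ "[]"] exI[of _ xs]) auto
    next
      case (Suc c')
      then have "hh xs + int c' < 0" using Cons.prems False by simp
      from Cons.IH[OF this] obtain w r where wr: "xs = w @ False # r" "hh w + int c' = 0"
        "\<forall>p q. w = p @ q \<longrightarrow> hh p + int c' \<ge> 0" by blast
      show ?thesis
      proof (intro exI conjI allI impI)
        show "x # xs = (False # w) @ False # r" using wr False by simp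
        show "hh (False # w) + int c = 0" using wr Suc by simp
        fix p q assume "False # w = p @ q"
        then show "0 \<le> hh p + int c" using wr Suc by (cases p) auto
      qed
    qed
  qed
qed

lemma dyck_decomp:
  assumes "dyck D" "D \<noteq> []"
  shows "\<exists>w r. D = True # w @ False # r \<and> dyck w \<and> dyck r"
proof -
  obtain x D' where D: "D = x # D'" using assms(2) by (cases D) auto
  have x: "x = True"
  proof (rule ccontr)
    assume "x \<noteq> True"
    then have "D = [False] @ D'" using D by simp
    then have "hh [False] \<ge> 0" using assms(1) unfolding dyck_def by blast
    then show False by simp
  qed
  have "hh D' + int 0 < 0" using assms(1) D x by (simp add: dyck_def)
  from first_return[OF this] obtain w r where wr: "D' = w @ False # r" "hh w = 0"
    "\<forall>p q. w = p @ q \<longrightarrow> hh p \<ge> 0" by auto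
  have dw: "dyck w" using wr by (simp add: dyck_def)
  have hr: "hh r = 0" using assms(1) D x wr by (simp add: dyck_def)
  have "\<forall>p q. r = p @ q \<longrightarrow> hh p \<ge> 0"
  proof (intro allI impI)
    fix p q assume "r = p @ q"
    then have "D = (True # w @ False # p) @ q" using D x wr by simp
    then have "hh (True # w @ False # p) \<ge> 0" using assms(1) unfolding dyck_def by blast
    then show "hh p \<ge> 0" using wr by simp
  qed
  then have "dyck r" using hr by (simp add: dyck_def)
  then show ?thesis using D x wr dw by auto
qed

lemma Xi_surj: "dyck D \<Longrightarrow> \<exists>T. Xi_steep T = D"
proof (induction "length D" arbitrary: D rule: less_induct)
  case less
  show ?case
  proof (cases "D = []")
    case True then show ?thesis by (intro exI[of _ "Node []"]) simp
  next
    case False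
    from dyck_decomp[OF less.prems False] obtain w r where
      wr: "D = True # w @ False # r" "dyck w" "dyck r" by blast
    obtain Tw where Tw: "Xi_steep Tw = w" using less.hyps[of w] wr by auto
    obtain Tr where Tr: "Xi_steep Tr = r" using less.hyps[of r] wr by auto
    obtain cs where cs: "Tr = Node cs" by (cases Tr)
    have "Xi_steep (Node (cs @ [Tw])) = D" using Tw Tr cs wr by simp
    then show ?thesis by blast
  qed
qed

lemma Lambda_steep_correct: "dyck D \<Longrightarrow> Xi_steep (Lambda_steep D) = D"
  unfolding Lambda_steep_def
  by (rule theI') (use Xi_surj Xi_inj in blast)

lemma dyck_paths_dyck: assumes "D \<in> dyck_paths n" shows "dyck D"
  unfolding dyck_def hh_def
proof (intro conjI allI impI)
  fix ys zs assume "D = ys @ zs"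
  then have "ys = take (length ys) D" "length ys \<le> length D" by auto
  moreover have "\<forall>k \<le> length D. count_right (take k D) \<le> count_up (take k D)"
    using assms by (simp add: dyck_paths_def)
  ultimately have "count_right ys \<le> count_up ys" by metis
  then show "0 \<le> int (count_up ys) - int (count_right ys)" by simp
qed (use assms in \<open>auto simp: dyck_paths_def\<close>)

abbreviation lexless :: "nat list \<Rightarrow> nat list \<Rightarrow> bool" where
  "lexless p q \<equiv> (p, q) \<in> lexord less_than"

lemma maxch_ge: "length cs \<le> maxch (Node cs)" "c \<in> set cs \<Longrightarrow> maxch c \<le> maxch (Node cs)"
  by (auto intro: Max_ge)

lemma rl_props:
  "(\<forall>p\<in>set (rl T). p \<noteq> [] \<and> (\<forall>d\<in>set p. 1 \<le> d \<and> d \<le> maxch T)) \<and>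
   sorted_wrt lexless (rl T) \<and> set (rl T) = set (node_codes T) \<and> length (rl T) = tsize T"
proof (induction T)
  case (Node cs)
  have "(\<forall>p\<in>set (rlf cs). \<exists>d t. p = d # t \<and> 1 \<le> d \<and> d \<le> length cs \<and>
            (\<forall>e\<in>set t. 1 \<le> e \<and> (\<exists>c\<in>set cs. e \<le> maxch c))) \<and>
        sorted_wrt lexless (rlf cs) \<and> set (rlf cs) = set (node_codes_list cs) \<and>
        length (rlf cs) = tsize (Node cs)"
    using Node.IH
  proof (induction cs)
    case Nil then show ?case by simp
  next
    case (Cons c cs)
    have IHc: "(\<forall>p\<in>set (rl c). p \<noteq> [] \<and> (\<forall>d\<in>set p. 1 \<le> d \<and> d \<le> maxch c))"
      "sorted_wrt lexless (rl c)" "set (rl c) = set (node_codes c)" "length (rl c) = tsize c"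
      using Cons.prems by auto
    note IHall = Cons.IH[OF Cons.prems[OF list.set_intros(2)]]
    have IHcs: "\<forall>p\<in>set (rlf cs). \<exists>d t. p = d # t \<and> 1 \<le> d \<and> d \<le> length cs \<and>
            (\<forall>e\<in>set t. 1 \<le> e \<and> (\<exists>c\<in>set cs. e \<le> maxch c))"
        "sorted_wrt lexless (rlf cs)" "set (rlf cs) = set (node_codes_list cs)"
        "length (rlf cs) = tsize (Node cs)"
      using IHall by auto
    have A: "\<forall>p\<in>set (rlf (c # cs)). \<exists>d t. p = d # t \<and> 1 \<le> d \<and> d \<le> length (c # cs) \<and>
            (\<forall>e\<in>set t. 1 \<le> e \<and> (\<exists>c'\<in>set (c # cs). e \<le> maxch c'))"
    proof
      fix p assume "p \<in> set (rlf (c # cs))"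
      then consider "p \<in> set (rlf cs)" | "p = [Suc (length cs)]" | t where "t \<in> set (rl c)" "p = Suc (length cs) # t"
        by auto
      then show "\<exists>d t. p = d # t \<and> 1 \<le> d \<and> d \<le> length (c # cs) \<and>
            (\<forall>e\<in>set t. 1 \<le> e \<and> (\<exists>c'\<in>set (c # cs). e \<le> maxch c'))"
      proof cases
        case 1 then show ?thesis using IHcs(1) by fastforce
      next
        case 2 then show ?thesis by simp
      next
        case 3 then show ?thesis using IHc(1) by fastforce
      qed
    qed
    have B: "sorted_wrt lexless (rlf (c # cs))"
    proof -
      define k where "k = length (c # cs)"
      have "sorted_wrt (\<lambda>x y. lexless (k # x) (k # y)) (rl c)"
        using IHc(2) by (rule sorted_wrt_mono_rel[rotated]) simp
      then have s0: "sorted_wrt lexless (map (Cons k) (rl c))" by (simp add: sorted_wrt_map)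
      have s0': "\<forall>y\<in>set (map (Cons k) (rl c)). lexless [k] y"
      proof
        fix y assume "y \<in> set (map (Cons k) (rl c))"
        then obtain t where "t \<in> set (rl c)" "y = k # t" by auto
        moreover have "t \<noteq> []" using IHc(1) \<open>t \<in> set (rl c)\<close> by blast
        ultimately show "lexless [k] y" by (simp add: neq_Nil_conv)
      qed
      have s1: "sorted_wrt lexless (map (Cons (length (c # cs))) ([] # rl c))"
        using s0 s0' unfolding k_def by simp
      have s2: "\<forall>x\<in>set (rlf cs). \<forall>y\<in>set (map (Cons (length (c # cs))) ([] # rl c)). lexless x y"
        using IHcs(1) by fastforce
      show ?thesis using s1 s2 IHcs(2) by (simp only: rlf.simps sorted_wrt_append)
    qed
    have C: "set (rlf (c # cs)) = set (node_codes_list (c # cs))"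
      using IHc(3) IHcs(3) by auto
    have D: "length (rlf (c # cs)) = tsize (Node (c # cs))"
      using IHc(4) IHcs(4) by simp
    show ?case using A B C D by blast
  qed
  then have H: "\<forall>p\<in>set (rlf cs). \<exists>d t. p = d # t \<and> 1 \<le> d \<and> d \<le> length cs \<and>
            (\<forall>e\<in>set t. 1 \<le> e \<and> (\<exists>c\<in>set cs. e \<le> maxch c))"
     "sorted_wrt lexless (rlf cs)" "set (rlf cs) = set (node_codes_list cs)"
        "length (rlf cs) = tsize (Node cs)" by auto
  have "\<forall>p\<in>set (rl (Node cs)). p \<noteq> [] \<and> (\<forall>d\<in>set p. 1 \<le> d \<and> d \<le> maxch (Node cs))"
  proof
    fix p assume "p \<in> set (rl (Node cs))"
    then obtain d t where dt: "p = d # t" "1 \<le> d" "d \<le> length cs"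
        "\<forall>e\<in>set t. 1 \<le> e \<and> (\<exists>c\<in>set cs. e \<le> maxch c)" using H(1) by auto
    have "\<forall>e\<in>set t. 1 \<le> e \<and> e \<le> maxch (Node cs)"
      using dt(4) maxch_ge(2) order_trans by blast
    moreover have "d \<le> maxch (Node cs)" using dt(3) maxch_ge(1)[of cs] by linarith
    ultimately show "p \<noteq> [] \<and> (\<forall>d\<in>set p. 1 \<le> d \<and> d \<le> maxch (Node cs))"
      using dt(1-2) by (simp del: maxch.simps)
  qed
  then show ?case using H(2-4) by simp
qed

fun fr :: "real \<Rightarrow> nat list \<Rightarrow> real" where
  "fr B [] = 0"
| "fr B (x # xs) = (real x + fr B xs) / B"

lemma fr_sum: "B \<noteq> 0 \<Longrightarrow> (\<Sum>i<length p. real (p ! i) / B ^ (i + 1)) = fr B p"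
proof (induction p)
  case Nil then show ?case by simp
next
  case (Cons x p)
  have "(\<Sum>i<length (x # p). real ((x # p) ! i) / B ^ (i + 1)) =
        real x / B + (\<Sum>i<length p. real (p ! i) / B ^ (i + 2))"
    by (simp add: sum.lessThan_Suc_shift del: sum.lessThan_Suc)
  also have "(\<Sum>i<length p. real (p ! i) / B ^ (i + 2)) = (\<Sum>i<length p. real (p ! i) / B ^ (i + 1)) / B"
    by (simp add: sum_divide_distrib mult.commute)
  finally show ?case using Cons by (simp add: add_divide_distrib)
qed

lemma xval_fr: "xval m p = real (length p) + fr (real m + 2) p"
  unfolding xval_def by (subst fr_sum) auto

definition ok :: "nat \<Rightarrow> nat list \<Rightarrow> bool" where
  "ok m p \<longleftrightarrow> (\<forall>d\<in>set p. 1 \<le> d \<and> d \<le> m)"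

lemma ok_Cons[simp]: "ok m (x # xs) \<longleftrightarrow> 1 \<le> x \<and> x \<le> m \<and> ok m xs"
  by (auto simp: ok_def)

lemma fr_bounds: "ok m p \<Longrightarrow> 0 \<le> fr (real m + 2) p \<and> fr (real m + 2) p < 1"
proof (induction p)
  case Nil then show ?case by simp
next
  case (Cons x p)
  then have "real x \<le> real m" "0 \<le> fr (real m + 2) p" "fr (real m + 2) p < 1" by auto
  then show ?case by (simp add: divide_simps)
qed

lemma fr_mono: "ok m p \<Longrightarrow> ok m q \<Longrightarrow> lexless p q \<Longrightarrow> fr (real m + 2) p < fr (real m + 2) q"
proof (induction p arbitrary: q)
  case Nil
  then obtain a x where q: "q = a # x" by auto
  then have "1 \<le> real a" "0 \<le> fr (real m + 2) x" using Nil fr_bounds[of m x] by auto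
  then show ?case using q by simp
next
  case (Cons a p)
  then obtain b y where q: "q = b # y" by (cases q) auto
  have bp: "0 \<le> fr (real m + 2) p" "fr (real m + 2) p < 1" "0 \<le> fr (real m + 2) y"
    using fr_bounds[of m p] fr_bounds[of m y] Cons.prems q by auto
  from Cons.prems q consider "a < b" | "a = b" "lexless p y" by auto
  then show ?case
  proof cases
    case 1
    then have "real a + 1 \<le> real b" by simp
    then have "real a + fr (real m + 2) p < real b + fr (real m + 2) y" using bp by linarith
    then show ?thesis using q by (simp add: divide_strict_right_mono)
  next
    case 2
    then have "fr (real m + 2) p < fr (real m + 2) y" using Cons q by auto
    then show ?thesis using q 2 by (simp add: divide_strict_right_mono)
  qed
qed

lemma key:
  assumes "ok m p" "ok m q" "p \<noteq> []" "q \<noteq> []"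
    and "(i::nat) < j \<Longrightarrow> lexless p q" "j < i \<Longrightarrow> lexless q p" "i = j \<Longrightarrow> p = q"
  shows "(length p - 1 + 2 \<le> length q - 1 \<or> (length p - 1 + 1 = length q - 1 \<and> i < j))
     \<longleftrightarrow> xval m p + 1 < xval m q"
proof -
  let ?B = "real m + 2"
  have bp: "0 \<le> fr ?B p" "fr ?B p < 1" "0 \<le> fr ?B q" "fr ?B q < 1"
    using fr_bounds assms(1,2) by auto
  have lp: "length p \<ge> 1" "length q \<ge> 1" using assms(3,4) by (auto simp: Suc_le_eq)
  have x: "xval m p + 1 < xval m q \<longleftrightarrow> real (length p) + 1 + fr ?B p < real (length q) + fr ?B q"
    by (simp add: xval_fr add_ac)
  consider "length q \<ge> length p + 2" | "length q \<le> length p" | "length q = length p + 1" by linarith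
  then show ?thesis
  proof cases
    case 1
    then have "real (length q) \<ge> real (length p) + 2" by linarith
    then show ?thesis using x bp 1 lp by auto
  next
    case 2
    then have "real (length q) \<le> real (length p)" by linarith
    then show ?thesis using x bp 2 lp by auto
  next
    case 3
    then have r: "real (length q) = real (length p) + 1" by simp
    have "i \<noteq> j" using assms(7) 3 by auto
    then consider "i < j" | "j < i" by linarith
    then show ?thesis
    proof cases
      case 1
      then have "fr ?B p < fr ?B q" using fr_mono assms by blast
      then show ?thesis using x r 1 3 lp by auto
    next
      case 2
      then have "fr ?B q < fr ?B p" using fr_mono assms by blast
      then show ?thesis using x r 2 3 lp by auto
    qed
  qed
qed

lemma bij_shift: "distinct ys \<Longrightarrow> bij_betw (\<lambda>i. ys ! (i - 1)) {1..length ys} (set ys)"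
  unfolding bij_betw_def
proof
  assume d: "distinct ys"
  show "inj_on (\<lambda>i. ys ! (i - 1)) {1..length ys}"
  proof (rule inj_onI)
    fix i j assume "i \<in> {1..length ys}" "j \<in> {1..length ys}" "ys ! (i - 1) = ys ! (j - 1)"
    then have "i - 1 = j - 1" using d nth_eq_iff_index_eq[of ys "i - 1" "j - 1"] by auto
    then show "i = j" using \<open>i \<in> {1..length ys}\<close> \<open>j \<in> {1..length ys}\<close> by auto
  qed
  show "(\<lambda>i. ys ! (i - 1)) ` {1..length ys} = set ys"
  proof
    show "(\<lambda>i. ys ! (i - 1)) ` {1..length ys} \<subseteq> set ys" by auto
    show "set ys \<subseteq> (\<lambda>i. ys ! (i - 1)) ` {1..length ys}"
    proof
      fix x assume "x \<in> set ys"
      then obtain k where "k < length ys" "ys ! k = x" by (auto simp: in_set_conv_nth)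
      then show "x \<in> (\<lambda>i. ys ! (i - 1)) ` {1..length ys}"
        by (intro image_eqI[of _ _ "k + 1"]) auto
    qed
  qed
qed

lemma iso_gen:
  fixes xs :: "real list"
  assumes d: "distinct xs"
    and R: "\<And>i j. i \<in> {1..length xs} \<Longrightarrow> j \<in> {1..length xs} \<Longrightarrow> R i j \<longleftrightarrow> xs ! (i - 1) + 1 < xs ! (j - 1)"
  shows "poset_iso ({1..length xs}, \<lambda>i j. i \<in> {1..length xs} \<and> j \<in> {1..length xs} \<and> R i j)
           (unit_interval_poset (set xs))"
proof -
  define S where "S = set xs"
  define L where "L = sorted_list_of_set S"
  define N where "N = length xs"
  have cS: "card S = N" using d by (simp add: S_def N_def distinct_card)
  have L: "distinct L" "set L = S" "length L = N" using cS by (auto simp: L_def S_def)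
  have a: "bij_betw (\<lambda>i. xs ! (i - 1)) {1..N} S" using bij_shift[OF d] by (simp add: S_def N_def)
  have b: "bij_betw (\<lambda>i. L ! (i - 1)) {1..N} S" using bij_shift[OF L(1)] L by simp
  define f where "f = inv_into {1..N} (\<lambda>i. L ! (i - 1)) \<circ> (\<lambda>i. xs ! (i - 1))"
  have fb: "bij_betw f {1..N} {1..N}" unfolding f_def
    using bij_betw_trans[OF a bij_betw_inv_into[OF b]] .
  have fi: "L ! (f i - 1) = xs ! (i - 1)" if "i \<in> {1..N}" for i
  proof -
    have im: "xs ! (i - 1) \<in> (\<lambda>i. L ! (i - 1)) ` {1..N}" using a b that
      by (metis bij_betw_apply bij_betw_imp_surj_on)
    show ?thesis unfolding f_def using f_inv_into_f[OF im] by simp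
  qed
  have fr: "f i \<in> {1..N}" if "i \<in> {1..N}" for i using fb that by (meson bij_betw_apply)
  show ?thesis unfolding poset_iso_def unit_interval_poset_def
  proof (intro exI[of _ f] conjI ballI)
    show "bij_betw f (fst ({1..length xs}, \<lambda>i j. i \<in> {1..length xs} \<and> j \<in> {1..length xs} \<and> R i j))
       (fst ({1..card (set xs)}, \<lambda>i j. i \<in> {1..card (set xs)} \<and> j \<in> {1..card (set xs)} \<and>
          sorted_list_of_set (set xs) ! (i - 1) + 1 < sorted_list_of_set (set xs) ! (j - 1)))"
      using fb cS by (simp add: S_def N_def)
  next
    fix i j assume ij: "i \<in> fst ({1..length xs}, \<lambda>i j. i \<in> {1..length xs} \<and> j \<in> {1..length xs} \<and> R i j)"
       "j \<in> fst ({1..length xs}, \<lambda>i j. i \<in> {1..length xs} \<and> j \<in> {1..length xs} \<and> R i j)"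
    then have ij': "i \<in> {1..N}" "j \<in> {1..N}" by (auto simp: N_def)
    show "snd ({1..length xs}, \<lambda>i j. i \<in> {1..length xs} \<and> j \<in> {1..length xs} \<and> R i j) i j =
       snd ({1..card (set xs)}, \<lambda>i j. i \<in> {1..card (set xs)} \<and> j \<in> {1..card (set xs)} \<and>
          sorted_list_of_set (set xs) ! (i - 1) + 1 < sorted_list_of_set (set xs) ! (j - 1)) (f i) (f j)"
      using fi[OF ij'(1)] fi[OF ij'(2)] fr[OF ij'(1)] fr[OF ij'(2)] ij' R[of i j] cS
      by (simp add: L_def S_def N_def)
  qed
qed

lemma xval_inj: "ok m p \<Longrightarrow> ok m q \<Longrightarrow> lexless p q \<Longrightarrow> xval m p \<noteq> xval m q"
proof
  assume a: "ok m p" "ok m q" "lexless p q" "xval m p = xval m q"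
  have "fr (real m + 2) p < fr (real m + 2) q" using fr_mono a by blast
  moreover have "0 \<le> fr (real m + 2) p" "fr (real m + 2) q < 1" using fr_bounds a by auto
  ultimately have "real (length q) < real (length p) + 1" "real (length p) < real (length q) + 1"
    using a(4) by (auto simp: xval_fr)
  then have "length p = length q" by linarith
  then show False using a(4) \<open>fr (real m + 2) p < fr (real m + 2) q\<close> by (simp add: xval_fr)
qed

theorem mainTheorem4:
  fixes n :: nat and D :: "bool list"
  assumes "n \<ge> 1" and "D \<in> dyck_paths n"
  shows "poset_iso (psi D) (Xi_poset (Lambda_steep D))"
proof -
  have dD: "dyck D" using dyck_paths_dyck assms(2) .
  define T where "T = Lambda_steep D"
  have XT: "Xi_steep T = D" using Lambda_steep_correct[OF dD] T_def by simp
  define P where "P = rl T"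
  define m where "m = maxch T"
  define xs where "xs = map (xval m) P"
  have rp: "\<forall>p\<in>set P. p \<noteq> [] \<and> ok m p" "sorted_wrt lexless P" "set P = set (node_codes T)"
    "length P = tsize T"
    using rl_props[of T] by (auto simp: P_def m_def ok_def)
  have cu: "count_up D = length xs" using counts_Xi[of T] XT rp(4) by (simp add: xs_def)
  have av: "area_vector D = map (\<lambda>p. length p - 1) P"
    using area_main[of 0 0 T "[]"] XT by (simp add: area_vector_def P_def)
  have nth: "i < length P \<Longrightarrow> j < length P \<Longrightarrow> (i < j \<longrightarrow> lexless (P ! i) (P ! j))" for i j
    using sorted_wrt_nth_less[OF rp(2)] by blast
  have dxs: "distinct xs"
    unfolding distinct_conv_nth
  proof (intro allI impI)
    fix i j assume ij: "i < length xs" "j < length xs" "i \<noteq> j"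
    then have ij': "i < length P" "j < length P" by (auto simp: xs_def)
    have okk: "ok m (P ! i)" "ok m (P ! j)" using rp(1) ij' by auto
    from ij(3) consider "i < j" | "j < i" by linarith
    then show "xs ! i \<noteq> xs ! j"
    proof cases
      case 1 then show ?thesis using xval_inj okk nth ij' by (simp add: xs_def)
    next
      case 2 then show ?thesis using xval_inj okk nth ij' by (metis nth_map xs_def)
    qed
  qed
  have psiD: "psi D = ({1..length xs}, \<lambda>i j. i \<in> {1..length xs} \<and> j \<in> {1..length xs} \<and>
      (area D i + 2 \<le> area D j \<or> (area D i + 1 = area D j \<and> i < j)))"
    unfolding psi_def cu ..
  have XP: "Xi_poset T = unit_interval_poset (set xs)"
    unfolding Xi_poset_def Xi_S_def xs_def m_def using rp(3) by simp
  show ?thesis unfolding T_def[symmetric] psiD XP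
  proof (rule iso_gen[OF dxs])
    fix i j assume ij: "i \<in> {1..length xs}" "j \<in> {1..length xs}"
    then have ij': "i - 1 < length P" "j - 1 < length P" by (auto simp: xs_def)
    have ar: "area D i = length (P ! (i - 1)) - 1" "area D j = length (P ! (j - 1)) - 1"
      using ij' by (auto simp: area_def av)
    have xr: "xs ! (i - 1) = xval m (P ! (i - 1))" "xs ! (j - 1) = xval m (P ! (j - 1))"
      using ij' by (auto simp: xs_def)
    have lt: "i < j \<longleftrightarrow> i - 1 < j - 1" using ij by auto
    have k: "(length (P ! (i - 1)) - 1 + 2 \<le> length (P ! (j - 1)) - 1 \<or>
        (length (P ! (i - 1)) - 1 + 1 = length (P ! (j - 1)) - 1 \<and> i - 1 < j - 1))
        \<longleftrightarrow> xval m (P ! (i - 1)) + 1 < xval m (P ! (j - 1))"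
      by (rule key) (use rp(1) ij' nth in auto)
    show "(area D i + 2 \<le> area D j \<or> area D i + 1 = area D j \<and> i < j) \<longleftrightarrow>
          xs ! (i - 1) + 1 < xs ! (j - 1)"
      using k ar xr lt by simp
  qed
qed

end
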